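(* Let $X,Y$ be Banach spaces and $\|\cdot\|$ a norm on $X\oplus Y$, with dual norm (also denoted $\|\cdot\|$) on $X^*\oplus Y^*$. Let $x^*\in X^*$, $y^*\in Y^*$ be such that (i) $1=\|x^*\|=\|x^*+y^*\|$; (ii) the partial Fréchet differential $\partial/\partial x^*$ of the dual norm exists at $x^*$ (i.e., the map $X^*\ni u^*\mapsto\|u^*\|$ is Fréchet differentiable at $x^*$); (iii) the partial Fréchet differential $\partial/\partial y^*$ of the dual norm at $x^*+y^*$ exists and equals $0$ (i.e., the map $Y^*\ni v^*\mapsto\|x^*+v^*\|$ is Fréchet differentiable at $y^*$ with derivative $0$). Then the dual norm is Fréchet differentiable at $x^*+y^*$.
   Context: The dual of $X\oplus Y$ is identified with $X^*\oplus Y^*$ via $(x^*+y^* )(x+y)=x^*(x)+y^*(y)$. *)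

theory Defs
  imports "HOL-Analysis.Analysis"
begin

text \<open>A norm N on the direct sum X \<oplus> Y (modelled as the product type), required to be
  equivalent to the standard product norm, so that (X \<oplus> Y, N) is a Banach space with the
  usual topology.\<close>
definition sum_norm :: "('a::real_normed_vector \<times> 'b::real_normed_vector \<Rightarrow> real) \<Rightarrow> bool" where
  "sum_norm N \<longleftrightarrow>
     (\<forall>z w. N (z + w) \<le> N z + N w) \<and>
     (\<forall>c z. N (scaleR c z) = \<bar>c\<bar> * N z) \<and>
     (\<forall>z. N z = 0 \<longrightarrow> z = 0) \<and>
     (\<exists>c C. 0 < c \<and> 0 < C \<and> (\<forall>z. c * norm z \<le> N z \<and> N z \<le> C * norm z))"

definition dual_norm ::
  "('a::real_normed_vector \<times> 'b::real_normed_vector \<Rightarrow> real) \<Rightarrow> ('a \<Rightarrow>\<^sub>L real) \<times> ('b \<Rightarrow>\<^sub>L real) \<Rightarrow> real" where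
  "dual_norm N p = Sup {\<bar>blinfun_apply (fst p) x + blinfun_apply (snd p) y\<bar> | x y. N (x, y) \<le> 1}"

end

theory Submission
  imports Defs
begin

lemma dn_eq: "dual_norm N (u,v) = Sup {\<bar>blinfun_apply u x + blinfun_apply v y\<bar> | x y. N (x, y) \<le> 1}"
  by (simp add: dual_norm_def)

lemma dn_bdd:
  fixes N :: "'a::real_normed_vector \<times> 'b::real_normed_vector \<Rightarrow> real"
    and u :: "'a \<Rightarrow>\<^sub>L real" and v :: "'b \<Rightarrow>\<^sub>L real"
  assumes "sum_norm N"
  shows "bdd_above {\<bar>blinfun_apply u x + blinfun_apply v y\<bar> | x y. N (x, y) \<le> 1}"
proof -
  from assms obtain c where c: "c > 0" "\<forall>z. c * norm z \<le> N z"
    unfolding sum_norm_def by blast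
  show ?thesis
  proof (rule bdd_aboveI, clarify)
    fix x :: 'a and y :: 'b assume N: "N (x,y) \<le> 1"
    have "c * norm (x,y) \<le> 1" using c(2) N by (meson order_trans)
    hence nz: "norm (x,y) \<le> 1/c" using c(1) by (simp add: field_simps mult.commute)
    have nx: "norm x \<le> 1/c" using nz norm_fst_le order_trans by blast
    have ny: "norm y \<le> 1/c" using nz norm_snd_le order_trans by blast
    have "\<bar>blinfun_apply u x + blinfun_apply v y\<bar> \<le> norm u * norm x + norm v * norm y"
      by (smt (verit) norm_blinfun real_norm_def)
    also have "\<dots> \<le> norm u * (1/c) + norm v * (1/c)"
      by (intro add_mono mult_left_mono nx ny) auto
    finally show "\<bar>blinfun_apply u x + blinfun_apply v y\<bar> \<le> norm u * (1/c) + norm v * (1/c)" .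
  qed
qed

lemma N0: fixes N :: "'a::real_normed_vector \<times> 'b::real_normed_vector \<Rightarrow> real" assumes "sum_norm N" shows "N (0,0) = 0"
proof -
  from assms have "N (scaleR 0 (0,0)) = \<bar>0\<bar> * N (0,0)" unfolding sum_norm_def by blast
  thus ?thesis by simp
qed

lemma dn_upper:
  fixes N :: "'a::real_normed_vector \<times> 'b::real_normed_vector \<Rightarrow> real"
    and u :: "'a \<Rightarrow>\<^sub>L real" and v :: "'b \<Rightarrow>\<^sub>L real"
  assumes "sum_norm N" "N (x,y) \<le> 1"
  shows "\<bar>blinfun_apply u x + blinfun_apply v y\<bar> \<le> dual_norm N (u,v)"
  unfolding dn_eq using assms by (intro cSup_upper dn_bdd) auto

lemma dn_least:
  fixes N :: "'a::real_normed_vector \<times> 'b::real_normed_vector \<Rightarrow> real"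
    and u :: "'a \<Rightarrow>\<^sub>L real" and v :: "'b \<Rightarrow>\<^sub>L real"
  assumes "sum_norm N" "\<And>x y. N (x,y) \<le> 1 \<Longrightarrow> \<bar>blinfun_apply u x + blinfun_apply v y\<bar> \<le> M"
  shows "dual_norm N (u,v) \<le> M"
  unfolding dn_eq
proof (rule cSup_least)
  have "N (0,0) \<le> 1" using N0[OF assms(1)] by simp
  thus "{\<bar>blinfun_apply u x + blinfun_apply v y\<bar> |x y. N (x, y) \<le> 1} \<noteq> {}" by blast
qed (use assms in blast)

lemma dn_triangle:
  fixes N :: "'a::real_normed_vector \<times> 'b::real_normed_vector \<Rightarrow> real"
  assumes "sum_norm N"
  shows "dual_norm N (p + q) \<le> dual_norm N p + dual_norm N q"
proof -
  obtain u v where p: "p = (u,v)" by fastforce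
  obtain u' v' where q: "q = (u',v')" by fastforce
  have "dual_norm N (u+u', v+v') \<le> dual_norm N (u,v) + dual_norm N (u',v')"
  proof (rule dn_least[OF assms])
    fix x y assume "N (x,y) \<le> 1"
    hence "\<bar>blinfun_apply u x + blinfun_apply v y\<bar> \<le> dual_norm N (u,v)"
      "\<bar>blinfun_apply u' x + blinfun_apply v' y\<bar> \<le> dual_norm N (u',v')"
      using dn_upper[OF assms] by auto
    thus "\<bar>blinfun_apply (u+u') x + blinfun_apply (v+v') y\<bar> \<le> dual_norm N (u,v) + dual_norm N (u',v')"
      by (simp add: blinfun.add_left)
  qed
  thus ?thesis using p q by simp
qed

lemma dn_scale_le:
  fixes N :: "'a::real_normed_vector \<times> 'b::real_normed_vector \<Rightarrow> real"
  assumes "sum_norm N"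
  shows "dual_norm N (c *\<^sub>R p) \<le> \<bar>c\<bar> * dual_norm N p"
proof -
  obtain u v where p: "p = (u,v)" by fastforce
  have "dual_norm N (c *\<^sub>R u, c *\<^sub>R v) \<le> \<bar>c\<bar> * dual_norm N (u,v)"
  proof (rule dn_least[OF assms])
    fix x y assume "N (x,y) \<le> 1"
    hence "\<bar>blinfun_apply u x + blinfun_apply v y\<bar> \<le> dual_norm N (u,v)"
      using dn_upper[OF assms] by auto
    hence "\<bar>c\<bar> * \<bar>blinfun_apply u x + blinfun_apply v y\<bar> \<le> \<bar>c\<bar> * dual_norm N (u,v)"
      by (simp add: mult_left_mono)
    thus "\<bar>blinfun_apply (c *\<^sub>R u) x + blinfun_apply (c *\<^sub>R v) y\<bar> \<le> \<bar>c\<bar> * dual_norm N (u,v)"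
      by (simp add: blinfun.scaleR_left abs_mult distrib_left[symmetric])
  qed
  thus ?thesis using p by simp
qed

lemma dn_scale:
  fixes N :: "'a::real_normed_vector \<times> 'b::real_normed_vector \<Rightarrow> real"
  assumes "sum_norm N"
  shows "dual_norm N (c *\<^sub>R p) = \<bar>c\<bar> * dual_norm N p"
proof (cases "c = 0")
  case True
  have "dual_norm N (0 *\<^sub>R p) \<le> 0" using dn_scale_le[OF assms, of 0 p] by simp
  moreover have "0 \<le> dual_norm N (0 *\<^sub>R p)"
    using dn_upper[OF assms, of 0 0, of "fst (0 *\<^sub>R p)" "snd (0 *\<^sub>R p)"] N0[OF assms] by (simp add: zero_prod_def)
  ultimately show ?thesis using True by simp
next
  case False
  have "dual_norm N p = dual_norm N (inverse c *\<^sub>R (c *\<^sub>R p))" using False by simp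
  also have "\<dots> \<le> \<bar>inverse c\<bar> * dual_norm N (c *\<^sub>R p)" by (rule dn_scale_le[OF assms])
  finally have "\<bar>c\<bar> * dual_norm N p \<le> dual_norm N (c *\<^sub>R p)"
    using False by (simp add: field_simps abs_inverse)
  with dn_scale_le[OF assms] show ?thesis by (meson order_antisym)
qed


lemma dn_zero:
  fixes N :: "'a::real_normed_vector \<times> 'b::real_normed_vector \<Rightarrow> real"
  assumes "sum_norm N"
  shows "dual_norm N 0 = 0"
  using dn_scale[OF assms, of 0 0] by simp

lemma upper_bound:
  fixes N :: "'a::banach \<times> 'b::banach \<Rightarrow> real"
    and xs :: "'a \<Rightarrow>\<^sub>L real" and ys :: "'b \<Rightarrow>\<^sub>L real"
  assumes sn: "sum_norm N"
    and g1: "dual_norm N (xs, 0) = 1"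
    and gd: "((\<lambda>u. dual_norm N (u, 0)) has_derivative D1) (at xs)"
    and Gd: "((\<lambda>v. dual_norm N (xs, v)) has_derivative (\<lambda>_. 0)) (at ys)"
    and G1: "dual_norm N (xs, ys) = 1"
    and e: "e > 0"
  shows "\<exists>d>0. \<forall>h k. norm (h,k) < d \<longrightarrow> dual_norm N (xs + h, ys + k) \<le> 1 + D1 h + e * norm (h,k)"
proof -
  define F where "F = dual_norm N"
  have lin: "linear D1" using gd has_derivative_linear by blast
  define e1 where "e1 = e/2"
  have e1: "e1 > 0" using e e1_def by simp
  obtain d1 where d1: "d1 > 0" and d1P: "\<And>y. norm (y - xs) < d1 \<Longrightarrow>
      norm (F (y,0) - F (xs,0) - D1 (y - xs)) \<le> e1 * norm (y - xs)"
    using gd e1 unfolding has_derivative_at_alt F_def by blast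
  define \<eta> where "\<eta> = d1/2"
  have eta: "\<eta> > 0" "\<eta> < d1" using d1 \<eta>_def by auto
  define K where "K = norm ys / \<eta> + 1"
  have K: "K \<ge> 1" using eta K_def by simp
  define e2 where "e2 = e / (4*K)"
  have e2: "e2 > 0" using e K e2_def by simp
  obtain d2 where d2: "d2 > 0" and d2P: "\<And>y. norm (y - ys) < d2 \<Longrightarrow>
      norm (F (xs,y) - F (xs,ys) - 0) \<le> e2 * norm (y - ys)"
    using Gd e2 unfolding has_derivative_at_alt F_def by blast
  define d where "d = min (\<eta>/2) (d2 / (2*K))"
  have d: "d > 0" using eta d2 K d_def by simp
  show ?thesis
  proof (intro exI[of _ d] conjI allI impI d)
    fix h :: "'a \<Rightarrow>\<^sub>L real" and k :: "'b \<Rightarrow>\<^sub>L real" assume hk: "norm (h,k) < d"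
    have nh: "norm h < d" using hk norm_fst_le le_less_trans by blast
    have nk: "norm k < d" using hk norm_snd_le le_less_trans by blast
    define \<epsilon> where "\<epsilon> = norm h / \<eta>"
    have eps0: "\<epsilon> \<ge> 0" using eta \<epsilon>_def by simp
    have "norm h * 2 < \<eta>" using nh d_def by simp
    hence eps1: "\<epsilon> < 1/2" using eta by (simp add: \<epsilon>_def field_simps)
    have epsh: "\<epsilon> * \<eta> = norm h" using eta \<epsilon>_def by simp
    have first: "F (\<epsilon> *\<^sub>R xs + h, 0) \<le> \<epsilon> + D1 h + e1 * norm h"
    proof (cases "h = 0")
      case True
      hence "\<epsilon> = 0" using \<epsilon>_def by simp
      thus ?thesis using True dn_zero[OF sn] lin F_def by (simp add: linear_0 zero_prod_def)
    next
      case False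
      hence epos: "\<epsilon> > 0" using eta \<epsilon>_def by simp
      define u where "u = inverse \<epsilon> *\<^sub>R h"
      have hu: "h = \<epsilon> *\<^sub>R u" using epos u_def by simp
      have nu: "norm u = \<eta>" using epos epsh u_def by (simp add: field_simps)
      have "norm ((xs + u) - xs) < d1" using nu eta by simp
      from d1P[OF this] have "F (xs + u, 0) \<le> 1 + D1 u + e1 * \<eta>"
        using g1 nu F_def by simp
      moreover have "F (\<epsilon> *\<^sub>R xs + h, 0) = \<epsilon> * F (xs + u, 0)"
      proof -
        have eq: "(\<epsilon> *\<^sub>R xs + h, 0) = \<epsilon> *\<^sub>R (xs + u, 0::'b \<Rightarrow>\<^sub>L real)"
          using hu by (simp add: scaleR_right_distrib)
        show ?thesis unfolding F_def eq dn_scale[OF sn] using epos by simp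
      qed
      moreover have "D1 h = \<epsilon> * D1 u" using hu lin by (simp add: linear_scale)
      ultimately have "F (\<epsilon> *\<^sub>R xs + h, 0) \<le> \<epsilon> * (1 + D1 u + e1 * \<eta>)"
        using epos by (simp add: mult_left_mono)
      also have "\<dots> = \<epsilon> + D1 h + e1 * norm h"
        using \<open>D1 h = \<epsilon> * D1 u\<close> epsh by (simp add: algebra_simps)
      finally show ?thesis .
    qed
    define z where "z = \<epsilon> *\<^sub>R ys + k"
    define w where "w = ys + inverse (1 - \<epsilon>) *\<^sub>R z"
    have onee: "1 - \<epsilon> > 1/2" using eps1 by simp
    have sw: "(1 - \<epsilon>) *\<^sub>R w = ys + k"
    proof -
      have "(1 - \<epsilon>) *\<^sub>R (inverse (1 - \<epsilon>) *\<^sub>R z) = z" using onee by simp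
      hence "(1 - \<epsilon>) *\<^sub>R w = (1 - \<epsilon>) *\<^sub>R ys + z"
        unfolding w_def by (simp add: scaleR_right_distrib)
      thus ?thesis unfolding z_def by (simp add: algebra_simps)
    qed
    have nz: "norm z \<le> K * norm (h,k)"
    proof -
      have "norm z \<le> \<epsilon> * norm ys + norm k" unfolding z_def
        using eps0 by (metis norm_scaleR norm_triangle_ineq abs_of_nonneg)
      also have "\<epsilon> * norm ys = (norm ys / \<eta>) * norm h" using \<epsilon>_def by simp
      also have "(norm ys / \<eta>) * norm h + norm k \<le> (norm ys / \<eta>) * norm (h,k) + norm (h,k)"
        using eta by (intro add_mono mult_left_mono norm_fst_le norm_snd_le) auto
      finally show ?thesis unfolding K_def by (simp add: algebra_simps)
    qed
    have nwy: "norm (w - ys) \<le> 2 * K * norm (h,k)"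
    proof -
      have "norm (w - ys) = inverse (1 - \<epsilon>) * norm z" unfolding w_def using onee by simp
      also have "\<dots> \<le> 2 * norm z"
        using onee by (intro mult_right_mono) (auto simp: field_simps)
      finally show ?thesis using nz by simp
    qed
    have "2 * K * norm (h,k) < d2"
    proof -
      have "2 * K * norm (h,k) < 2 * K * d" using hk K by simp
      also have "2 * K * d \<le> d2"
      proof -
        have "d \<le> d2 / (2*K)" using d_def by simp
        hence "2 * K * d \<le> 2 * K * (d2 / (2*K))" using K by (intro mult_left_mono) auto
        thus ?thesis using K by simp
      qed
      finally show ?thesis .
    qed
    hence "norm (w - ys) < d2" using nwy by simp
    from d2P[OF this] have "F (xs, w) \<le> 1 + e2 * norm (w - ys)" using G1 F_def by simp
    also have "\<dots> \<le> 1 + e2 * (2 * K * norm (h,k))" using nwy e2 by simp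
    also have "e2 * (2 * K * norm (h,k)) = e/2 * norm (h,k)" using K e2_def by simp
    finally have Gw: "F (xs, w) \<le> 1 + e/2 * norm (h,k)" .
    have second: "F ((1 - \<epsilon>) *\<^sub>R xs, ys + k) \<le> 1 - \<epsilon> + e/2 * norm (h,k)"
    proof -
      have eq: "((1 - \<epsilon>) *\<^sub>R xs, ys + k) = (1 - \<epsilon>) *\<^sub>R (xs, w)" using sw by simp
      have "F ((1 - \<epsilon>) *\<^sub>R xs, ys + k) = (1 - \<epsilon>) * F (xs, w)"
        unfolding F_def eq dn_scale[OF sn] using onee by simp
      also have "\<dots> \<le> (1 - \<epsilon>) * (1 + e/2 * norm (h,k))"
        using Gw onee by (simp add: F_def mult_left_mono)
      also have "\<dots> \<le> 1 - \<epsilon> + e/2 * norm (h,k)"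
        using eps0 e by (simp add: algebra_simps)
      finally show ?thesis .
    qed
    have "F (xs + h, ys + k) \<le> F (\<epsilon> *\<^sub>R xs + h, 0) + F ((1 - \<epsilon>) *\<^sub>R xs, ys + k)"
    proof -
      have "(xs + h, ys + k) = (\<epsilon> *\<^sub>R xs + h, 0) + ((1 - \<epsilon>) *\<^sub>R xs, ys + k)"
        by (simp add: algebra_simps)
      thus ?thesis unfolding F_def using dn_triangle[OF sn] by metis
    qed
    also have "\<dots> \<le> \<epsilon> + D1 h + e1 * norm h + (1 - \<epsilon> + e/2 * norm (h,k))"
      using first second by simp
    also have "\<dots> \<le> 1 + D1 h + e * norm (h,k)"
    proof -
      have "e * norm h \<le> e * norm (h,k)" using norm_fst_le[of h k] e by (simp add: mult_left_mono)
      thus ?thesis unfolding e1_def by simp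
    qed
    finally show "dual_norm N (xs + h, ys + k) \<le> 1 + D1 h + e * norm (h,k)" by (simp add: F_def)
  qed
qed

theorem lemma3p2:
  fixes N :: "'a::banach \<times> 'b::banach \<Rightarrow> real"
    and xs :: "'a \<Rightarrow>\<^sub>L real" and ys :: "'b \<Rightarrow>\<^sub>L real"
  assumes "sum_norm N"
    and "dual_norm N (xs, 0) = 1" and "dual_norm N (xs, ys) = 1"
    and "(\<lambda>u. dual_norm N (u, 0)) differentiable (at xs)"
    and "((\<lambda>v. dual_norm N (xs, v)) has_derivative (\<lambda>_. 0)) (at ys)"
  shows "(dual_norm N) differentiable (at (xs, ys))"
proof -
  from assms(4) obtain D1 where gd: "((\<lambda>u. dual_norm N (u, 0)) has_derivative D1) (at xs)"
    unfolding differentiable_def by blast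
  have lin: "linear D1" using gd has_derivative_linear by blast
  have bl: "bounded_linear (\<lambda>q::('a \<Rightarrow>\<^sub>L real) \<times> ('b \<Rightarrow>\<^sub>L real). D1 (fst q))"
    using bounded_linear_compose[OF has_derivative_bounded_linear[OF gd] bounded_linear_fst] .
  have "(dual_norm N has_derivative (\<lambda>q. D1 (fst q))) (at (xs,ys))"
    unfolding has_derivative_at_alt
  proof (intro conjI allI impI bl)
    fix e :: real assume e: "e > 0"
    obtain d where d: "d > 0" and dP: "\<forall>h k. norm (h,k) < d \<longrightarrow>
        dual_norm N (xs + h, ys + k) \<le> 1 + D1 h + e * norm (h,k)"
      using upper_bound[OF assms(1,2) gd assms(5,3) e] by blast
    show "\<exists>d>0. \<forall>y. norm (y - (xs,ys)) < d \<longrightarrow>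
      norm (dual_norm N y - dual_norm N (xs,ys) - D1 (fst (y - (xs,ys)))) \<le> e * norm (y - (xs,ys))"
    proof (intro exI[of _ d] conjI allI impI d)
      fix y :: "('a \<Rightarrow>\<^sub>L real) \<times> ('b \<Rightarrow>\<^sub>L real)" assume yd: "norm (y - (xs,ys)) < d"
      define h where "h = fst y - xs"
      define k where "k = snd y - ys"
      have yeq: "y = (xs + h, ys + k)" unfolding h_def k_def by simp
      have ydiff: "y - (xs,ys) = (h,k)" unfolding h_def k_def by (simp add: prod_eq_iff)
      have nhk: "norm (h,k) < d" using yd ydiff by simp
      have nmhk: "norm (-h,-k) = norm (h,k)"
        by (metis uminus_Pair norm_minus_cancel)
      have up: "dual_norm N (xs + h, ys + k) \<le> 1 + D1 h + e * norm (h,k)" using dP nhk by blast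
      have "dual_norm N (xs + -h, ys + -k) \<le> 1 + D1 (-h) + e * norm (-h,-k)"
        using dP nhk nmhk by (metis)
      hence down: "dual_norm N (xs - h, ys - k) \<le> 1 - D1 h + e * norm (h,k)"
        using nmhk lin by (simp add: linear_neg)
      have "dual_norm N (2 *\<^sub>R (xs,ys)) \<le> dual_norm N (xs + h, ys + k) + dual_norm N (xs - h, ys - k)"
      proof -
        have "2 *\<^sub>R (xs,ys) = (xs + h, ys + k) + (xs - h, ys - k)"
          by (simp add: scaleR_2)
        thus ?thesis using dn_triangle[OF assms(1)] by metis
      qed
      hence tri: "2 \<le> dual_norm N (xs + h, ys + k) + dual_norm N (xs - h, ys - k)"
        unfolding dn_scale[OF assms(1)] using assms(3) by simp
      have "\<bar>dual_norm N (xs + h, ys + k) - 1 - D1 h\<bar> \<le> e * norm (h,k)"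
        using up down tri by linarith
      thus "norm (dual_norm N y - dual_norm N (xs,ys) - D1 (fst (y - (xs,ys)))) \<le> e * norm (y - (xs,ys))"
        using yeq ydiff assms(3) by simp
    qed
  qed
  thus ?thesis unfolding differentiable_def by blast
qed

end
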